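(* Let $K$ be a positive commutative semiring with its natural (pre)order. Let $C$ be a collection of $\mathrm{FO}(=,\neq\!\bot,\leq)$-definable atoms and $D$ a collection of $\mathrm{FO}(\bot?,\neq,\not\leq)$-definable atoms. Let $\phi\in\mathrm{FO}(C)$ and $\psi\in\mathrm{FO}(D)$. Let $\mathfrak A$ be a first-order $\tau$-structure with finite domain $A$, let $\mathbb{X}$ be a $K$-team of $\mathfrak A$, and let $X=\chi_K\circ\mathbb{X}$ be its possibilistic collapse. Then: (i) $\mathfrak A\models_{\mathbb{X}}\phi$ (in $K$-team semantics) implies $\mathfrak A\models_{X}\phi$ (in $\mathbb{B}$-team semantics); (ii) if moreover $K$ is $+$-dense, then $\mathfrak A\models_{X}\psi$ implies $\mathfrak A\models_{\mathbb{X}}\psi$.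
   Context: Commutative semiring $(K,+,\cdot,0,1)$. It is positive if $a+b=0$ implies $a=b=0$, and $ab=0$ implies $a=0$ or $b=0$. It is $+$-dense if every nonzero $a$ equals $b+c$ for some nonzero $b,c$. The natural order is $a\leq b$ iff $\exists c:a+c=b$. $\mathbb{B}=(\{0,1\},\vee,\wedge,0,1)$. $\chi_K\colon K\to\mathbb{B}$ maps $0$ to $0$ and nonzero elements to $1$. $K$-teams: $\mathrm{As}(V,A)$ is the set of assignments $V\to A$ for a finite variable set $V$. A $K$-team is $\mathbb{X}\colon\mathrm{As}(V,A)\to K$, with support $\mathrm{Sup}(\mathbb{X})=\{s:\mathbb{X}(s)\neq0\}$. Its possibilistic collapse is the $\mathbb{B}$-team $\chi_K\circ\mathbb{X}$. Fix a total order on variables, $V=\{x_1<\dots<x_k\}$, and put $\vec a_s=(s(x_1),\dots,s(x_k))$. $\pi_{\mathfrak A,\mathbb{X}}$ is the $K$-interpretation over $A$ for the vocabulary $\tau\cup\{R\}$, $R$ fresh of arity $k$, given by: - $\tau$-facts true in $\mathfrak A$ get $1$, false ones get $0$, and their negations get the opposite value; - $R(\vec a_s)\mapsto\mathbb{X}(s)$; - $\neg R(\vec a_s)\mapsto1$ if $\mathbb{X}(s)=0$, and $0$ otherwise. A $K$-interpretation is extended to formulae under assignments as follows: - literals get their $\pi$-values; - $x=y$ and $x\neq y$ get $1$ or $0$ according to their truth; - $\wedge$ is product and $\vee$ is sum; - $\forall$ is the product and $\exists$ the sum over $A$; - $\neg$ is evaluated via negation normal form. A formula (in)equality $\phi*\psi$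 has value $1$ if $[\![\phi]\!]*[\![\psi]\!]$ holds in the semiring, and $0$ otherwise. $\bot$ is a formula of constant value $0$. An atom $\alpha$ comes with, for each finite ordered domain $V$ containing its variables, a defining sentence $\phi_{\alpha,V}$ over $\tau\cup\{R\}$. Examples are dependence, independence and inclusion atoms, defined by sentences such as $\forall\vec u(\theta_{\vec i}(\vec u)\leq\theta_{\vec j}(\vec u))$ with $\theta_{\vec i}(\vec u)=\exists\vec x(R(\vec x)\wedge\vec x_{\vec i}=\vec u)$. It is $\mathcal L$-definable if all $\phi_{\alpha,V}\in\mathcal L$. $\mathrm{FO}(=,\neq\!\bot,\leq)$ (resp. $\mathrm{FO}(\bot?,\neq,\not\leq)$) consists of formulae built from first-order literals and formula (in)equalities of the forms $\phi=\psi$, $\phi\neq\bot$, $\phi\leq\psi$ (resp. $\phi=\bot$, $\phi\neq\psi$, $\phi\not\leq\psi$) between first-order formulae, using $\wedge,\vee,\forall,\exists$. $\mathrm{FO}(C)$ is negation-normal-form first-order logic over $\tau$ extended with (unnegated) atoms from $C$. $K$-team semantics for a $K$-team $\mathbb{X}$ with domain $V$ (quantified variables assumed not in the current domain): - $\mathfrak A\models_{\mathbb{X}}l$ for a first-order literal $l$ iff $\mathfrak A\models_s l$ for all $s\in\mathrm{Sup}(\mathbb{X})$; - $\mathfrak A\models_{\mathbb{X}}\alpha$ for an atom iff $[\![\phi_{\alpha,V}]\!]_{\pi_{\mathfrak A,\mathbb{X}}}\neq0$; - $\wedge$ is conjunction; - $\mathfrak A\models_{\mathbb{X}}\psi\vee\theta$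 iff $\mathfrak A\models_{\mathbb{Y}}\psi$ and $\mathfrak A\models_{\mathbb{Z}}\theta$ for some $\mathbb{Y},\mathbb{Z}$ with $\mathbb{Y}(s)+\mathbb{Z}(s)=\mathbb{X}(s)$ for all $s$; - $\mathfrak A\models_{\mathbb{X}}\forall x\psi$ iff $\mathfrak A\models_{\mathbb{Y}}\psi$ where $\mathbb{Y}(s[a/x])=\mathbb{X}(s)$ for all $s$ and all $a\in A$; - $\mathfrak A\models_{\mathbb{X}}\exists x\psi$ iff $\mathfrak A\models_{\mathbb{Y}}\psi$ for some $\mathbb{Y}$ with $\mathbb{X}(s)=\sum_{a\in A}\mathbb{Y}(s[a/x])$ for all $s$. For $K=\mathbb{B}$ this is standard team semantics. *)

theory Defs
  imports Main "HOL-Library.FuncSet"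
begin

datatype bsr = BF | BT

instantiation bsr :: comm_semiring_1
begin
definition zero_bsr :: bsr where "zero_bsr = BF"
definition one_bsr :: bsr where "one_bsr = BT"
definition plus_bsr :: "bsr \<Rightarrow> bsr \<Rightarrow> bsr" where
  "plus_bsr a b = (if a = BT \<or> b = BT then BT else BF)"
definition times_bsr :: "bsr \<Rightarrow> bsr \<Rightarrow> bsr" where
  "times_bsr a b = (if a = BT \<and> b = BT then BT else BF)"
instance
proof
  fix a b c :: bsr
  show "a + b + c = a + (b + c)" by (cases a; cases b; cases c) (auto simp: plus_bsr_def)
  show "a + b = b + a" by (cases a; cases b) (auto simp: plus_bsr_def)
  show "0 + a = a" by (cases a) (auto simp: plus_bsr_def zero_bsr_def)
  show "a * b * c = a * (b * c)" by (cases a; cases b; cases c) (auto simp: times_bsr_def)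
  show "a * b = b * a" by (cases a; cases b) (auto simp: times_bsr_def)
  show "1 * a = a" by (cases a) (auto simp: times_bsr_def one_bsr_def)
  show "0 * a = 0" by (cases a) (auto simp: times_bsr_def zero_bsr_def)
  show "a * 0 = 0" by (cases a) (auto simp: times_bsr_def zero_bsr_def)
  show "(a + b) * c = a * c + b * c"
    by (cases a; cases b; cases c) (auto simp: times_bsr_def plus_bsr_def)
  show "(0::bsr) \<noteq> 1" by (simp add: zero_bsr_def one_bsr_def)
qed
end

definition chi :: "'k::zero \<Rightarrow> bsr" where
  "chi a = (if a = 0 then BF else BT)"

definition positive_semiring :: "'k::comm_semiring_1 itself \<Rightarrow> bool" where
  "positive_semiring _ \<longleftrightarrow>
     (\<forall>a b::'k. a + b = 0 \<longrightarrow> a = 0 \<and> b = 0) \<and> (\<forall>a b::'k. a * b = 0 \<longrightarrow> a = 0 \<or> b = 0)"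

definition plus_dense :: "'k::comm_semiring_1 itself \<Rightarrow> bool" where
  "plus_dense _ \<longleftrightarrow> (\<forall>a::'k. a \<noteq> 0 \<longrightarrow> (\<exists>b c. b \<noteq> 0 \<and> c \<noteq> 0 \<and> a = b + c))"

definition nat_le :: "'k::comm_semiring_1 \<Rightarrow> 'k \<Rightarrow> bool" where
  "nat_le a b \<longleftrightarrow> (\<exists>c. a + c = b)"

text \<open>As(V,A): assignments V -> A, represented extensionally (undefined outside V).\<close>
definition As :: "'v set \<Rightarrow> 'a set \<Rightarrow> ('v \<Rightarrow> 'a) set" where
  "As V A = V \<rightarrow>\<^sub>E A"

text \<open>A K-team with domain V over A: a map As(V,A) -> K (extended by 0 outside As(V,A)).\<close>
definition is_team :: "'a set \<Rightarrow> 'v set \<Rightarrow> (('v \<Rightarrow> 'a) \<Rightarrow> 'k::zero) \<Rightarrow> bool" where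
  "is_team A V X \<longleftrightarrow> (\<forall>s. s \<notin> As V A \<longrightarrow> X s = 0)"

definition Supp :: "'a set \<Rightarrow> 'v set \<Rightarrow> (('v \<Rightarrow> 'a) \<Rightarrow> 'k::zero) \<Rightarrow> ('v \<Rightarrow> 'a) set" where
  "Supp A V X = {s \<in> As V A. X s \<noteq> 0}"

datatype cmp = CEq | CNeq | CLe | CNle

text \<open>Formulas over tau \<union> {R} in negation normal form, with the constant Bot
  and formula (in)equalities \<open>Cmp c \<phi> \<psi>\<close>.  The relation symbols of tau have type 'r.\<close>
datatype ('r, 'v) rf =
    Rl 'r "'v list" | NRl 'r "'v list"
  | RA "'v list" | NRA "'v list"
  | Eqv 'v 'v | Neqv 'v 'v
  | Bot
  | Conj "('r, 'v) rf" "('r, 'v) rf" | Disj "('r, 'v) rf" "('r, 'v) rf"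
  | Forall 'v "('r, 'v) rf" | Exists 'v "('r, 'v) rf"
  | Cmp cmp "('r, 'v) rf" "('r, 'v) rf"

primrec fv_rf :: "('r, 'v) rf \<Rightarrow> 'v set" where
  "fv_rf (Rl r xs) = set xs"
| "fv_rf (NRl r xs) = set xs"
| "fv_rf (RA xs) = set xs"
| "fv_rf (NRA xs) = set xs"
| "fv_rf (Eqv x y) = {x, y}"
| "fv_rf (Neqv x y) = {x, y}"
| "fv_rf Bot = {}"
| "fv_rf (Conj p q) = fv_rf p \<union> fv_rf q"
| "fv_rf (Disj p q) = fv_rf p \<union> fv_rf q"
| "fv_rf (Forall x p) = fv_rf p - {x}"
| "fv_rf (Exists x p) = fv_rf p - {x}"
| "fv_rf (Cmp c p q) = fv_rf p \<union> fv_rf q"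

primrec is_fo :: "nat \<Rightarrow> ('r, 'v) rf \<Rightarrow> bool" where
  "is_fo k (Rl r xs) = True"
| "is_fo k (NRl r xs) = True"
| "is_fo k (RA xs) = (length xs = k)"
| "is_fo k (NRA xs) = (length xs = k)"
| "is_fo k (Eqv x y) = True"
| "is_fo k (Neqv x y) = True"
| "is_fo k Bot = False"
| "is_fo k (Conj p q) = (is_fo k p \<and> is_fo k q)"
| "is_fo k (Disj p q) = (is_fo k p \<and> is_fo k q)"
| "is_fo k (Forall x p) = is_fo k p"
| "is_fo k (Exists x p) = is_fo k p"
| "is_fo k (Cmp c p q) = False"

primrec in_frag :: "(cmp \<Rightarrow> ('r, 'v) rf \<Rightarrow> ('r, 'v) rf \<Rightarrow> bool) \<Rightarrow> nat \<Rightarrow> ('r, 'v) rf \<Rightarrow> bool" where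
  "in_frag ok k (Rl r xs) = True"
| "in_frag ok k (NRl r xs) = True"
| "in_frag ok k (RA xs) = (length xs = k)"
| "in_frag ok k (NRA xs) = (length xs = k)"
| "in_frag ok k (Eqv x y) = True"
| "in_frag ok k (Neqv x y) = True"
| "in_frag ok k Bot = False"
| "in_frag ok k (Conj p q) = (in_frag ok k p \<and> in_frag ok k q)"
| "in_frag ok k (Disj p q) = (in_frag ok k p \<and> in_frag ok k q)"
| "in_frag ok k (Forall x p) = in_frag ok k p"
| "in_frag ok k (Exists x p) = in_frag ok k p"
| "in_frag ok k (Cmp c p q) = ok c p q"

text \<open>FO(=, \<noteq>Bot, \<le>): \<phi> = \<psi>, \<phi> \<noteq> Bot, \<phi> \<le> \<psi> with \<phi>, \<psi> first-order.\<close>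
definition frag_C :: "nat \<Rightarrow> ('r, 'v) rf \<Rightarrow> bool" where
  "frag_C k = in_frag (\<lambda>c p q. is_fo k p \<and>
      ((c = CEq \<and> is_fo k q) \<or> (c = CNeq \<and> q = Bot) \<or> (c = CLe \<and> is_fo k q))) k"

text \<open>FO(Bot?, \<noteq>, \<not>\<le>): \<phi> = Bot, \<phi> \<noteq> \<psi>, \<phi> \<not>\<le> \<psi> with \<phi>, \<psi> first-order.\<close>
definition frag_D :: "nat \<Rightarrow> ('r, 'v) rf \<Rightarrow> bool" where
  "frag_D k = in_frag (\<lambda>c p q. is_fo k p \<and>
      ((c = CEq \<and> q = Bot) \<or> (c = CNeq \<and> is_fo k q) \<or> (c = CNle \<and> is_fo k q))) k"

definition cmp_holds :: "cmp \<Rightarrow> 'k::comm_semiring_1 \<Rightarrow> 'k \<Rightarrow> bool" where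
  "cmp_holds c a b = (case c of CEq \<Rightarrow> a = b | CNeq \<Rightarrow> a \<noteq> b
                      | CLe \<Rightarrow> nat_le a b | CNle \<Rightarrow> \<not> nat_le a b)"

text \<open>Value of R(a_1,...,a_k): X(s) for the s in As(V,A) with vec a_s = (a_1,...,a_k),
  where V = {x_1 < ... < x_k}; 0 if there is no such s.\<close>
definition R_val :: "'a set \<Rightarrow> 'v::linorder set \<Rightarrow> (('v \<Rightarrow> 'a) \<Rightarrow> 'k::zero) \<Rightarrow> 'a list \<Rightarrow> 'k" where
  "R_val A V X as =
     (if \<exists>s \<in> As V A. map s (sorted_list_of_set V) = as
      then X (THE s. s \<in> As V A \<and> map s (sorted_list_of_set V) = as) else 0)"

primrec eval :: "'a set \<Rightarrow> ('r \<Rightarrow> 'a list \<Rightarrow> bool) \<Rightarrow> 'v::linorder set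
    \<Rightarrow> (('v \<Rightarrow> 'a) \<Rightarrow> 'k::comm_semiring_1) \<Rightarrow> ('v \<Rightarrow> 'a) \<Rightarrow> ('r, 'v) rf \<Rightarrow> 'k" where
  "eval A I V X s (Rl r xs) = (if I r (map s xs) then 1 else 0)"
| "eval A I V X s (NRl r xs) = (if I r (map s xs) then 0 else 1)"
| "eval A I V X s (RA xs) = R_val A V X (map s xs)"
| "eval A I V X s (NRA xs) = (if R_val A V X (map s xs) = 0 then 1 else 0)"
| "eval A I V X s (Eqv x y) = (if s x = s y then 1 else 0)"
| "eval A I V X s (Neqv x y) = (if s x \<noteq> s y then 1 else 0)"
| "eval A I V X s Bot = 0"
| "eval A I V X s (Conj p q) = eval A I V X s p * eval A I V X s q"
| "eval A I V X s (Disj p q) = eval A I V X s p + eval A I V X s q"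
| "eval A I V X s (Forall x p) = (\<Prod>a\<in>A. eval A I V X (s(x := a)) p)"
| "eval A I V X s (Exists x p) = (\<Sum>a\<in>A. eval A I V X (s(x := a)) p)"
| "eval A I V X s (Cmp c p q) =
     (if cmp_holds c (eval A I V X s p) (eval A I V X s q) then 1 else 0)"

text \<open>Value of a sentence (the assignment is irrelevant for sentences).\<close>
definition sent_val :: "'a set \<Rightarrow> ('r \<Rightarrow> 'a list \<Rightarrow> bool) \<Rightarrow> 'v::linorder set
    \<Rightarrow> (('v \<Rightarrow> 'a) \<Rightarrow> 'k::comm_semiring_1) \<Rightarrow> ('r, 'v) rf \<Rightarrow> 'k" where
  "sent_val A I V X p = eval A I V X (\<lambda>_. undefined) p"

text \<open>Atoms are named by elements of type 'c; avars c are the variables of atom c and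
  adef c V is its defining sentence phi_{c,V} over tau \<union> {R} (R of arity |V|).\<close>
definition definable ::
  "(nat \<Rightarrow> ('r, 'v) rf \<Rightarrow> bool) \<Rightarrow> ('c \<Rightarrow> 'v set) \<Rightarrow> ('c \<Rightarrow> 'v set \<Rightarrow> ('r, 'v) rf) \<Rightarrow> 'c \<Rightarrow> bool" where
  "definable L avars adef c \<longleftrightarrow>
     (\<forall>V. finite V \<and> avars c \<subseteq> V \<longrightarrow> L (card V) (adef c V) \<and> fv_rf (adef c V) = {})"

datatype ('r, 'v, 'c) tf =
    TRl 'r "'v list" | TNRl 'r "'v list"
  | TEq 'v 'v | TNeq 'v 'v
  | TAtom 'c
  | TAnd "('r, 'v, 'c) tf" "('r, 'v, 'c) tf" | TOr "('r, 'v, 'c) tf" "('r, 'v, 'c) tf"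
  | TAll 'v "('r, 'v, 'c) tf" | TEx 'v "('r, 'v, 'c) tf"

primrec atoms :: "('r, 'v, 'c) tf \<Rightarrow> 'c set" where
  "atoms (TRl r xs) = {}"
| "atoms (TNRl r xs) = {}"
| "atoms (TEq x y) = {}"
| "atoms (TNeq x y) = {}"
| "atoms (TAtom c) = {c}"
| "atoms (TAnd p q) = atoms p \<union> atoms q"
| "atoms (TOr p q) = atoms p \<union> atoms q"
| "atoms (TAll x p) = atoms p"
| "atoms (TEx x p) = atoms p"

primrec wf_tf :: "('c \<Rightarrow> 'v set) \<Rightarrow> 'v set \<Rightarrow> ('r, 'v, 'c) tf \<Rightarrow> bool" where
  "wf_tf av V (TRl r xs) = (set xs \<subseteq> V)"
| "wf_tf av V (TNRl r xs) = (set xs \<subseteq> V)"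
| "wf_tf av V (TEq x y) = ({x, y} \<subseteq> V)"
| "wf_tf av V (TNeq x y) = ({x, y} \<subseteq> V)"
| "wf_tf av V (TAtom c) = (av c \<subseteq> V)"
| "wf_tf av V (TAnd p q) = (wf_tf av V p \<and> wf_tf av V q)"
| "wf_tf av V (TOr p q) = (wf_tf av V p \<and> wf_tf av V q)"
| "wf_tf av V (TAll x p) = (x \<notin> V \<and> wf_tf av (insert x V) p)"
| "wf_tf av V (TEx x p) = (x \<notin> V \<and> wf_tf av (insert x V) p)"

text \<open>K-team semantics: tsat A I adef V X phi means A |=_X phi for the K-team X with domain V.\<close>
primrec tsat :: "'a set \<Rightarrow> ('r \<Rightarrow> 'a list \<Rightarrow> bool) \<Rightarrow> ('c \<Rightarrow> 'v set \<Rightarrow> ('r, 'v) rf)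
    \<Rightarrow> 'v::linorder set \<Rightarrow> (('v \<Rightarrow> 'a) \<Rightarrow> 'k::comm_semiring_1) \<Rightarrow> ('r, 'v, 'c) tf \<Rightarrow> bool" where
  "tsat A I adef V X (TRl r xs) = (\<forall>s \<in> Supp A V X. I r (map s xs))"
| "tsat A I adef V X (TNRl r xs) = (\<forall>s \<in> Supp A V X. \<not> I r (map s xs))"
| "tsat A I adef V X (TEq x y) = (\<forall>s \<in> Supp A V X. s x = s y)"
| "tsat A I adef V X (TNeq x y) = (\<forall>s \<in> Supp A V X. s x \<noteq> s y)"
| "tsat A I adef V X (TAtom c) = (sent_val A I V X (adef c V) \<noteq> 0)"
| "tsat A I adef V X (TAnd p q) = (tsat A I adef V X p \<and> tsat A I adef V X q)"
| "tsat A I adef V X (TOr p q) =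
     (\<exists>Y Z. is_team A V Y \<and> is_team A V Z \<and> (\<forall>s \<in> As V A. Y s + Z s = X s)
            \<and> tsat A I adef V Y p \<and> tsat A I adef V Z q)"
| "tsat A I adef V X (TAll x p) =
     tsat A I adef (insert x V)
       (\<lambda>t. if t \<in> As (insert x V) A then X (t(x := undefined)) else 0) p"
| "tsat A I adef V X (TEx x p) =
     (\<exists>Y. is_team A (insert x V) Y \<and> (\<forall>s \<in> As V A. X s = (\<Sum>a\<in>A. Y (s(x := a))))
          \<and> tsat A I adef (insert x V) Y p)"

end

theory Submission
  imports Defs
begin

lemma bsr_eqI: "((x::bsr) = 0 \<longleftrightarrow> y = 0) \<Longrightarrow> x = y"
  by (cases x; cases y) (auto simp: zero_bsr_def)

lemma bsr_pos: "positive_semiring TYPE(bsr)"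
  unfolding positive_semiring_def zero_bsr_def plus_bsr_def times_bsr_def
  apply (intro conjI allI)
  subgoal for a b by (cases a; cases b) auto
  subgoal for a b by (cases a; cases b) auto
  done

lemma chi_eq0[simp]: "chi a = 0 \<longleftrightarrow> a = 0"
  by (simp add: chi_def zero_bsr_def)

lemma chi0[simp]: "chi 0 = 0"
  by simp

lemma pos_add: assumes "positive_semiring TYPE('k::comm_semiring_1)" shows "((a::'k) + b = 0) = (a = 0 \<and> b = 0)"
proof
  assume "a + b = 0" then show "a = 0 \<and> b = 0" using assms unfolding positive_semiring_def by blast
qed simp

lemma pos_mult: assumes "positive_semiring TYPE('k::comm_semiring_1)" shows "((a::'k) * b = 0) = (a = 0 \<or> b = 0)"
proof
  assume "a * b = 0" then show "a = 0 \<or> b = 0" using assms unfolding positive_semiring_def by blast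
qed auto

lemma pos_sum: assumes "positive_semiring TYPE('k::comm_semiring_1)" "finite S" shows
   "(sum (f::_\<Rightarrow>'k) S = 0) = (\<forall>x\<in>S. f x = 0)"
  using assms(2) by (induction S rule: finite_induct) (auto simp: pos_add[OF assms(1)])

lemma pos_prod: assumes "positive_semiring TYPE('k::comm_semiring_1)" "finite S" shows
   "(prod (f::_\<Rightarrow>'k) S = 0) = (\<exists>x\<in>S. f x = 0)"
  using assms(2) by (induction S rule: finite_induct) (auto simp: pos_mult[OF assms(1)])

lemma chi_add: "positive_semiring TYPE('k::comm_semiring_1) \<Longrightarrow> chi ((a::'k) + b) = chi a + chi b"
  by (rule bsr_eqI) (simp add: pos_add bsr_pos)

lemma chi_mult: "positive_semiring TYPE('k::comm_semiring_1) \<Longrightarrow> chi ((a::'k) * b) = chi a * chi b"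
  by (rule bsr_eqI) (simp add: pos_mult bsr_pos)

lemma chi_sum: "positive_semiring TYPE('k::comm_semiring_1) \<Longrightarrow> finite S \<Longrightarrow>
   chi (sum (f::_\<Rightarrow>'k) S) = (\<Sum>x\<in>S. chi (f x))"
  by (rule bsr_eqI) (simp add: pos_sum bsr_pos)

lemma chi_prod: "positive_semiring TYPE('k::comm_semiring_1) \<Longrightarrow> finite S \<Longrightarrow>
   chi (prod (f::_\<Rightarrow>'k) S) = (\<Prod>x\<in>S. chi (f x))"
  by (rule bsr_eqI) (simp add: pos_prod bsr_pos)

lemma chi1[simp]: "chi (1::'k::comm_semiring_1) = 1"
  by (rule bsr_eqI) simp

lemma R_val_chi: "R_val A V (chi \<circ> X) as = chi (R_val A V X as)"
  unfolding R_val_def by simp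

lemma eval_fo:
  assumes P: "positive_semiring TYPE('k::comm_semiring_1)" and fin: "finite A"
  shows "is_fo k p \<Longrightarrow> eval A I V (chi \<circ> (X::_ \<Rightarrow> 'k)) s p = chi (eval A I V X s p)"
proof (induction p arbitrary: s)
  case (Conj p q) then show ?case by (simp add: chi_mult[OF P])
next
  case (Disj p q) then show ?case by (simp add: chi_add[OF P])
next
  case (Forall x p) then show ?case by (simp add: chi_prod[OF P fin])
next
  case (Exists x p) then show ?case by (simp add: chi_sum[OF P fin])
next
  case (Rl r xs) show ?case by simp
next
  case (NRl r xs) show ?case by simp
next
  case (RA xs) show ?case using R_val_chi[of A V X "map s xs"] by (simp add: comp_def)
next
  case (NRA xs) show ?case using R_val_chi[of A V X "map s xs"] by (simp add: comp_def)
next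
  case (Eqv x y) show ?case by simp
next
  case (Neqv x y) show ?case by simp
next
  case Bot then show ?case by simp
next
  case (Cmp c p q) then show ?case by simp
qed

lemma nat_le_chi: "positive_semiring TYPE('k::comm_semiring_1) \<Longrightarrow> nat_le (a::'k) b \<Longrightarrow> nat_le (chi a) (chi b)"
  unfolding nat_le_def by (metis chi_add)

definition okC :: "nat \<Rightarrow> cmp \<Rightarrow> ('r,'v) rf \<Rightarrow> ('r,'v) rf \<Rightarrow> bool" where
  "okC k = (\<lambda>c p q. is_fo k p \<and>
      ((c = CEq \<and> is_fo k q) \<or> (c = CNeq \<and> q = Bot) \<or> (c = CLe \<and> is_fo k q)))"

definition okD :: "nat \<Rightarrow> cmp \<Rightarrow> ('r,'v) rf \<Rightarrow> ('r,'v) rf \<Rightarrow> bool" where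
  "okD k = (\<lambda>c p q. is_fo k p \<and>
      ((c = CEq \<and> q = Bot) \<or> (c = CNeq \<and> is_fo k q) \<or> (c = CNle \<and> is_fo k q)))"

lemma lit_fo:
  assumes P: "positive_semiring TYPE('k::comm_semiring_1)" and fin: "finite A"
    and fo: "is_fo k p"
  shows "(eval A I V (chi \<circ> X) s p \<noteq> 0) = (eval A I V (X::_ \<Rightarrow> 'k) s p \<noteq> 0)"
  using eval_fo[OF P fin fo] by simp

lemma fragC:
  assumes P: "positive_semiring TYPE('k::comm_semiring_1)" and fin: "finite A"
  shows "in_frag (okC k) k th
   \<Longrightarrow> eval A I V (X::_ \<Rightarrow> 'k) s th \<noteq> 0 \<Longrightarrow> eval A I V (chi \<circ> X) s th \<noteq> 0"
proof (induction th arbitrary: s)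
  case (Conj p q)
  have "eval A I V X s p \<noteq> 0" "eval A I V X s q \<noteq> 0" using Conj.prems(2) by auto
  then show ?case using Conj.IH Conj.prems(1) by (auto simp: pos_mult[OF bsr_pos])
next
  case (Disj p q)
  have "eval A I V X s p \<noteq> 0 \<or> eval A I V X s q \<noteq> 0" using Disj.prems(2) by auto
  then show ?case using Disj.IH Disj.prems(1) by (auto simp: pos_add[OF bsr_pos])
next
  case (Forall x p)
  have "\<forall>a\<in>A. eval A I V X (s(x:=a)) p \<noteq> 0" using fin Forall.prems(2) by (metis eval.simps(10) prod_zero)
  then show ?case using Forall.IH Forall.prems(1) by (auto simp: pos_prod[OF bsr_pos fin])
next
  case (Exists x p) then show ?case by (simp add: pos_sum[OF bsr_pos fin]) (metis sum.neutral)
next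
  case (Rl r xs) then show ?case using lit_fo[OF P fin, of k "Rl r xs", where I=I and V=V and X=X and s=s] by (simp add: comp_def)
next
  case (NRl r xs) then show ?case using lit_fo[OF P fin, of k "NRl r xs", where I=I and V=V and X=X and s=s] by (simp add: comp_def)
next
  case (RA xs) then show ?case using lit_fo[OF P fin, of k "RA xs", where I=I and V=V and X=X and s=s] by (simp add: comp_def)
next
  case (NRA xs) then show ?case using lit_fo[OF P fin, of k "NRA xs", where I=I and V=V and X=X and s=s] by (simp add: comp_def)
next
  case (Eqv x y) then show ?case using lit_fo[OF P fin, of k "Eqv x y", where I=I and V=V and X=X and s=s] by (simp add: comp_def)
next
  case (Neqv x y) then show ?case using lit_fo[OF P fin, of k "Neqv x y", where I=I and V=V and X=X and s=s] by (simp add: comp_def)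
next
  case Bot then show ?case by simp
next
  case (Cmp c p q)
  have ok: "okC k c p q" using Cmp.prems(1) by simp
  have h: "cmp_holds c (eval A I V X s p) (eval A I V X s q)"
    using Cmp.prems(2) by (simp split: if_splits)
  have ep: "eval A I V (chi \<circ> X) s p = chi (eval A I V X s p)"
    using ok eval_fo[OF P fin] unfolding okC_def by blast
  have "cmp_holds c (eval A I V (chi \<circ> X) s p) (eval A I V (chi \<circ> X) s q)"
  proof -
    consider "c = CEq" "is_fo k q" | "c = CNeq" "q = Bot" | "c = CLe" "is_fo k q"
      using ok unfolding okC_def by blast
    then show ?thesis
    proof cases
      case 1 then show ?thesis using h ep eval_fo[OF P fin, of k q] by (simp add: cmp_holds_def)
    next
      case 2 then show ?thesis using h ep by (simp add: cmp_holds_def)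
    next
      case 3 then show ?thesis using h ep eval_fo[OF P fin, of k q] nat_le_chi[OF P]
        by (simp add: cmp_holds_def)
    qed
  qed
  then show ?case by (simp add: comp_def)
qed

lemma fragD:
  assumes P: "positive_semiring TYPE('k::comm_semiring_1)" and fin: "finite A"
  shows "in_frag (okD k) k th
   \<Longrightarrow> eval A I V (chi \<circ> X) s th \<noteq> 0 \<Longrightarrow> eval A I V (X::_ \<Rightarrow> 'k) s th \<noteq> 0"
proof (induction th arbitrary: s)
  case (Conj p q) then show ?case by (auto simp: pos_mult[OF bsr_pos] pos_mult[OF P])
next
  case (Disj p q) then show ?case by (auto simp: pos_add[OF bsr_pos] pos_add[OF P])
next
  case (Forall x p) then show ?case by (auto simp: pos_prod[OF bsr_pos fin] pos_prod[OF P fin])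
next
  case (Exists x p) then show ?case by (auto simp: pos_sum[OF bsr_pos fin] pos_sum[OF P fin])
next
  case (Rl r xs) then show ?case using lit_fo[OF P fin, of k "Rl r xs", where I=I and V=V and X=X and s=s] by (simp add: comp_def)
next
  case (NRl r xs) then show ?case using lit_fo[OF P fin, of k "NRl r xs", where I=I and V=V and X=X and s=s] by (simp add: comp_def)
next
  case (RA xs) then show ?case using lit_fo[OF P fin, of k "RA xs", where I=I and V=V and X=X and s=s] by (simp add: comp_def)
next
  case (NRA xs) then show ?case using lit_fo[OF P fin, of k "NRA xs", where I=I and V=V and X=X and s=s] by (simp add: comp_def)
next
  case (Eqv x y) then show ?case using lit_fo[OF P fin, of k "Eqv x y", where I=I and V=V and X=X and s=s] by (simp add: comp_def)
next
  case (Neqv x y) then show ?case using lit_fo[OF P fin, of k "Neqv x y", where I=I and V=V and X=X and s=s] by (simp add: comp_def)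
next
  case Bot then show ?case by simp
next
  case (Cmp c p q)
  have ok: "okD k c p q" using Cmp.prems(1) by simp
  have h: "cmp_holds c (eval A I V (chi \<circ> X) s p) (eval A I V (chi \<circ> X) s q)"
    using Cmp.prems(2) by (simp add: comp_def split: if_splits)
  have ep: "eval A I V (chi \<circ> X) s p = chi (eval A I V X s p)"
    using ok eval_fo[OF P fin] unfolding okD_def by blast
  have "cmp_holds c (eval A I V X s p) (eval A I V X s q)"
  proof -
    consider "c = CEq" "q = Bot" | "c = CNeq" "is_fo k q" | "c = CNle" "is_fo k q"
      using ok unfolding okD_def by blast
    then show ?thesis
    proof cases
      case 1 then show ?thesis using h ep by (simp add: cmp_holds_def)
    next
      case 2 then show ?thesis using h ep eval_fo[OF P fin, of k q] by (auto simp: cmp_holds_def)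
    next
      case 3 then show ?thesis using h ep eval_fo[OF P fin, of k q] nat_le_chi[OF P]
        by (auto simp: cmp_holds_def)
    qed
  qed
  then show ?case by simp
qed

lemma As_upd: "s \<in> As V A \<Longrightarrow> x \<notin> V \<Longrightarrow> a \<in> A \<Longrightarrow> s(x:=a) \<in> As (insert x V) A"
  unfolding As_def by (auto simp: PiE_def extensional_def)

lemma As_upd_undef: "s \<in> As V A \<Longrightarrow> x \<notin> V \<Longrightarrow> (s(x:=a))(x:=undefined) = s"
  unfolding As_def by (auto simp: PiE_def extensional_def)

lemma As_restr: "t \<in> As (insert x V) A \<Longrightarrow> x \<notin> V \<Longrightarrow>
   t(x:=undefined) \<in> As V A \<and> t x \<in> A \<and> (t(x:=undefined))(x := t x) = t"
  unfolding As_def by (auto simp: PiE_def extensional_def)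

lemma Supp_chi: "Supp A V (chi \<circ> X) = Supp A V X"
  unfolding Supp_def by simp

lemma team_chi: "is_team A V Y \<Longrightarrow> is_team A V (chi \<circ> Y)"
  unfolding is_team_def by simp

lemma all_team_chi: "chi \<circ> (\<lambda>t. if t \<in> As (insert x V) A then X (t(x := undefined)) else 0)
   = (\<lambda>t. if t \<in> As (insert x V) A then (chi \<circ> X) (t(x := undefined)) else 0)"
  by (rule ext) simp

lemma part1:
  fixes X :: "('v::linorder \<Rightarrow> 'a) \<Rightarrow> 'k::comm_semiring_1"
  assumes P: "positive_semiring TYPE('k)" and fin: "finite A"
    and C_def: "\<forall>c \<in> C. definable frag_C avars adef c"
  shows "atoms \<phi> \<subseteq> C \<Longrightarrow> wf_tf avars V \<phi> \<Longrightarrow> finite V \<Longrightarrow>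
     tsat A I adef V X \<phi> \<Longrightarrow> tsat A I adef V (chi \<circ> X) \<phi>"
proof (induction \<phi> arbitrary: V X)
  case (TAtom c)
  then have "frag_C (card V) (adef c V)" using C_def unfolding definable_def by auto
  then have "in_frag (okC (card V)) (card V) (adef c V)"
    unfolding frag_C_def okC_def by simp
  note fr = this
  have e: "eval A I V X (\<lambda>_. undefined) (adef c V) \<noteq> 0"
    using TAtom.prems(4) by (simp add: sent_val_def comp_def)
  have "eval A I V (chi \<circ> X) (\<lambda>_. undefined) (adef c V) \<noteq> 0" by (rule fragC[OF P fin fr e])
  then show ?case by (simp add: sent_val_def comp_def)
next
  case (TAnd p q) then show ?case by simp
next
  case (TOr p q)
  from TOr.prems(4) obtain Y Z where YZ: "is_team A V Y" "is_team A V Z"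
    "\<forall>s \<in> As V A. Y s + Z s = X s" "tsat A I adef V Y p" "tsat A I adef V Z q" by auto
  have s1: "tsat A I adef V (chi \<circ> Y) p" using TOr.IH(1)[of V Y] TOr.prems YZ(4) by (simp add: comp_def)
  have s2: "tsat A I adef V (chi \<circ> Z) q" using TOr.IH(2)[of V Z] TOr.prems YZ(5) by (simp add: comp_def)
  have s3: "\<forall>s \<in> As V A. (chi \<circ> Y) s + (chi \<circ> Z) s = (chi \<circ> X) s"
  proof
    fix s assume "s \<in> As V A"
    then have "Y s + Z s = X s" using YZ(3) by blast
    then show "(chi \<circ> Y) s + (chi \<circ> Z) s = (chi \<circ> X) s" using chi_add[OF P, of "Y s" "Z s"] by simp
  qed
  have "is_team A V (chi \<circ> Y)" "is_team A V (chi \<circ> Z)" using YZ team_chi by auto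
  then show ?case using s1 s2 s3 by (simp only: tsat.simps) blast
next
  case (TAll x p)
  let ?T = "\<lambda>t. if t \<in> As (insert x V) A then X (t(x := undefined)) else 0"
  have w: "atoms p \<subseteq> C" "wf_tf avars (insert x V) p" "finite (insert x V)" using TAll.prems by auto
  have "tsat A I adef (insert x V) ?T p" using TAll.prems(4) by (simp only: tsat.simps)
  from TAll.IH[OF w this] have "tsat A I adef (insert x V) (chi \<circ> ?T) p" .
  then show ?case unfolding all_team_chi by (simp only: tsat.simps)
next
  case (TEx x p)
  from TEx.prems(4) obtain Y where Y: "is_team A (insert x V) Y"
    "\<forall>s \<in> As V A. X s = (\<Sum>a\<in>A. Y (s(x := a)))" "tsat A I adef (insert x V) Y p" by auto
  have s1: "tsat A I adef (insert x V) (chi \<circ> Y) p" using TEx.IH[of "insert x V" Y] TEx.prems Y(3) by (simp add: comp_def)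
  have s3: "\<forall>s \<in> As V A. (chi \<circ> X) s = (\<Sum>a\<in>A. (chi \<circ> Y) (s(x := a)))"
  proof
    fix s assume "s \<in> As V A"
    then have "X s = (\<Sum>a\<in>A. Y (s(x := a)))" using Y(2) by blast
    then show "(chi \<circ> X) s = (\<Sum>a\<in>A. (chi \<circ> Y) (s(x := a)))" using chi_sum[OF P fin] by simp
  qed
  have "is_team A (insert x V) (chi \<circ> Y)" using Y team_chi by auto
  then show ?case using s1 s3 by (simp only: tsat.simps) blast
qed (simp_all add: Supp_chi)

lemma split2:
  fixes x :: "'k::comm_semiring_1"
  assumes P: "positive_semiring TYPE('k)" and D: "plus_dense TYPE('k)"
    and h: "y + z = chi x"
  shows "\<exists>b c. b + c = x \<and> chi b = y \<and> chi c = z"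
proof (cases "x = 0")
  case True
  then have "y = 0" "z = 0" using h pos_add[OF bsr_pos] by auto
  then show ?thesis using True by (intro exI[of _ 0]) simp
next
  case False
  show ?thesis
  proof (cases "y = 0")
    case True
    then have "z = chi x" using h by simp
    then show ?thesis using True by (intro exI[of _ 0] exI[of _ x]) simp
  next
    case y: False
    show ?thesis
    proof (cases "z = 0")
      case True
      then have "y = chi x" using h by simp
      then show ?thesis using True by (intro exI[of _ 0] exI[of _ x]) (simp add: add.commute)
    next
      case z: False
      obtain b c where bc: "b \<noteq> 0" "c \<noteq> 0" "x = b + c"
        using D False unfolding plus_dense_def by blast
      have "chi b = y" by (rule bsr_eqI) (simp add: bc y)
      moreover have "chi c = z" by (rule bsr_eqI) (simp add: bc z)
      ultimately show ?thesis using bc by blast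
    qed
  qed
qed

lemma splitn:
  fixes a :: "'k::comm_semiring_1"
  assumes D: "plus_dense TYPE('k)" and fS: "finite S" and ne: "S \<noteq> {}"
  shows "a \<noteq> 0 \<Longrightarrow> \<exists>f. (\<forall>i\<in>S. f i \<noteq> 0) \<and> sum f S = a"
  using fS ne
proof (induction S arbitrary: a rule: finite_ne_induct)
  case (singleton b)
  then show ?case by (intro exI[of _ "\<lambda>_. a"]) simp
next
  case (insert b F)
  obtain a1 a2 where aa: "a1 \<noteq> 0" "a2 \<noteq> 0" "a = a1 + a2"
    using D insert.prems unfolding plus_dense_def by blast
  obtain f where f: "\<forall>i\<in>F. f i \<noteq> 0" "sum f F = a2" using insert.IH aa by blast
  have "sum (f(b := a1)) F = sum f F" using insert.hyps by (intro sum.cong) auto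
  then have "sum (f(b := a1)) (insert b F) = a"
    using insert.hyps f aa by simp
  then show ?case using f aa by (intro exI[of _ "f(b := a1)"]) auto
qed

lemma splitA:
  fixes x :: "'k::comm_semiring_1"
  assumes P: "positive_semiring TYPE('k)" and D: "plus_dense TYPE('k)" and fin: "finite A"
    and h: "(\<Sum>a\<in>A. y a) = chi x"
  shows "\<exists>f. (\<forall>a\<in>A. chi (f a) = y a) \<and> x = sum f A"
proof (cases "x = 0")
  case True
  then have "\<forall>a\<in>A. y a = 0" using h pos_sum[OF bsr_pos fin] by simp
  then show ?thesis using True by (intro exI[of _ "\<lambda>_. 0"]) simp
next
  case False
  define S where "S = {a\<in>A. y a \<noteq> 0}"
  have fS: "finite S" using fin S_def by simp
  have "S \<noteq> {}" using h False pos_sum[OF bsr_pos fin, of y] S_def by auto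
  then obtain g where g: "\<forall>i\<in>S. g i \<noteq> 0" "sum g S = x" using splitn[OF D fS] False by blast
  define f where "f a = (if a \<in> S then g a else 0)" for a
  have "sum f A = sum g S"
    unfolding f_def using fin S_def by (simp add: sum.If_cases Int_def)
  moreover have "\<forall>a\<in>A. chi (f a) = y a"
  proof
    fix a assume a: "a \<in> A"
    show "chi (f a) = y a"
    proof (rule bsr_eqI)
      show "(chi (f a) = 0) = (y a = 0)" using g a unfolding f_def S_def by auto
    qed
  qed
  ultimately show ?thesis using g by metis
qed

lemma part2:
  fixes X :: "('v::linorder \<Rightarrow> 'a) \<Rightarrow> 'k::comm_semiring_1"
  assumes P: "positive_semiring TYPE('k)" and Dn: "plus_dense TYPE('k)" and fin: "finite A"
    and D_def: "\<forall>d \<in> D. definable frag_D avars adef d"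
  shows "atoms \<psi> \<subseteq> D \<Longrightarrow> wf_tf avars V \<psi> \<Longrightarrow> finite V \<Longrightarrow>
     tsat A I adef V (chi \<circ> X) \<psi> \<Longrightarrow> tsat A I adef V X \<psi>"
proof (induction \<psi> arbitrary: V X)
  case (TAtom c)
  then have "frag_D (card V) (adef c V)" using D_def unfolding definable_def by auto
  then have "in_frag (okD (card V)) (card V) (adef c V)"
    unfolding frag_D_def okD_def by simp
  note fr = this
  have e: "eval A I V (chi \<circ> X) (\<lambda>_. undefined) (adef c V) \<noteq> 0"
    using TAtom.prems(4) by (simp add: sent_val_def comp_def)
  have "eval A I V X (\<lambda>_. undefined) (adef c V) \<noteq> 0" by (rule fragD[OF P fin fr e])
  then show ?case by (simp add: sent_val_def comp_def)
next
  case (TAnd p q) then show ?case by simp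
next
  case (TOr p q)
  from TOr.prems(4) obtain Y' Z' where YZ: "is_team A V Y'" "is_team A V Z'"
    "\<forall>s \<in> As V A. Y' s + Z' s = chi (X s)" "tsat A I adef V Y' p" "tsat A I adef V Z' q" by auto
  have "\<forall>s. \<exists>bc. s \<in> As V A \<longrightarrow> fst bc + snd bc = X s \<and> chi (fst bc) = Y' s \<and> chi (snd bc) = Z' s"
    using split2[OF P Dn] YZ(3) by fastforce
  then obtain g where g: "\<And>s. s \<in> As V A \<Longrightarrow> fst (g s) + snd (g s) = X s \<and> chi (fst (g s)) = Y' s \<and> chi (snd (g s)) = Z' s"
    by metis
  define Y where "Y s = (if s \<in> As V A then fst (g s) else 0)" for s
  define Z where "Z s = (if s \<in> As V A then snd (g s) else 0)" for s
  have cY: "chi \<circ> Y = Y'"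
    using g YZ(1) unfolding Y_def is_team_def by (auto simp: fun_eq_iff)
  have cZ: "chi \<circ> Z = Z'"
    using g YZ(2) unfolding Z_def is_team_def by (auto simp: fun_eq_iff)
  have tY: "is_team A V Y" "is_team A V Z" unfolding Y_def Z_def is_team_def by auto
  have sY: "tsat A I adef V Y p" using TOr.IH(1)[of V Y, unfolded cY] TOr.prems YZ(4) by simp
  have sZ: "tsat A I adef V Z q" using TOr.IH(2)[of V Z, unfolded cZ] TOr.prems YZ(5) by simp
  have s3: "\<forall>s\<in>As V A. Y s + Z s = X s" using g unfolding Y_def Z_def by auto
  show ?case using tY sY sZ s3 by (simp only: tsat.simps) blast
next
  case (TAll x p)
  let ?T = "\<lambda>t. if t \<in> As (insert x V) A then X (t(x := undefined)) else 0"
  have w: "atoms p \<subseteq> D" "wf_tf avars (insert x V) p" "finite (insert x V)" using TAll.prems by auto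
  have "tsat A I adef (insert x V) (chi \<circ> ?T) p" using TAll.prems(4) unfolding all_team_chi by (simp only: tsat.simps)
  from TAll.IH[OF w this] show ?case by (simp only: tsat.simps)
next
  case (TEx x p)
  have xV: "x \<notin> V" using TEx.prems(2) by simp
  from TEx.prems(4) obtain Y' where Y': "is_team A (insert x V) Y'"
    "\<forall>s \<in> As V A. chi (X s) = (\<Sum>a\<in>A. Y' (s(x := a)))" "tsat A I adef (insert x V) Y' p" by auto
  have "\<forall>s. \<exists>f. s \<in> As V A \<longrightarrow> (\<forall>a\<in>A. chi (f a) = Y' (s(x:=a))) \<and> X s = sum f A"
    using splitA[OF P Dn fin] Y'(2) by metis
  then obtain g where g: "\<And>s. s \<in> As V A \<Longrightarrow> (\<forall>a\<in>A. chi (g s a) = Y' (s(x:=a))) \<and> X s = sum (g s) A"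
    by metis
  define Y where "Y t = (if t \<in> As (insert x V) A then g (t(x:=undefined)) (t x) else 0)" for t
  have tY: "is_team A (insert x V) Y" unfolding Y_def is_team_def by auto
  have cY: "chi \<circ> Y = Y'"
  proof
    fix t
    show "(chi \<circ> Y) t = Y' t"
    proof (cases "t \<in> As (insert x V) A")
      case True
      note r = As_restr[OF True xV]
      then have "chi (g (t(x:=undefined)) (t x)) = Y' ((t(x:=undefined))(x := t x))"
        using g by blast
      then show ?thesis using True r unfolding Y_def by simp
    next
      case False
      then show ?thesis using Y'(1) unfolding Y_def is_team_def by simp
    qed
  qed
  have sum: "\<forall>s \<in> As V A. X s = (\<Sum>a\<in>A. Y (s(x := a)))"
  proof
    fix s assume s: "s \<in> As V A"
    have "(\<Sum>a\<in>A. Y (s(x := a))) = sum (g s) A"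
      using As_upd[OF s xV] As_upd_undef[OF s xV] unfolding Y_def by (intro sum.cong) auto
    then show "X s = (\<Sum>a\<in>A. Y (s(x := a)))" using g[OF s] by simp
  qed
  have sY: "tsat A I adef (insert x V) Y p"
    using TEx.IH[of "insert x V" Y, unfolded cY] TEx.prems Y'(3) by simp
  show ?case using tY sum sY by auto
qed (simp_all add: Supp_chi)

theorem mainTheorem6:
  fixes A :: "'a set" and I :: "'r \<Rightarrow> 'a list \<Rightarrow> bool"
    and avars :: "'c \<Rightarrow> 'v::linorder set" and adef :: "'c \<Rightarrow> 'v set \<Rightarrow> ('r, 'v) rf"
    and C D :: "'c set"
    and \<phi> \<psi> :: "('r, 'v, 'c) tf"
    and V :: "'v set" and X :: "('v \<Rightarrow> 'a) \<Rightarrow> 'k::comm_semiring_1"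
  assumes K_pos: "positive_semiring TYPE('k)"
    and C_def: "\<forall>c \<in> C. definable frag_C avars adef c"
    and D_def: "\<forall>d \<in> D. definable frag_D avars adef d"
    and phi_C: "atoms \<phi> \<subseteq> C" and phi_wf: "wf_tf avars V \<phi>"
    and psi_D: "atoms \<psi> \<subseteq> D" and psi_wf: "wf_tf avars V \<psi>"
    and A_fin: "finite A" and A_ne: "A \<noteq> {}"
    and V_fin: "finite V"
    and X_team: "is_team A V X"
  shows "(tsat A I adef V X \<phi> \<longrightarrow> tsat A I adef V (chi \<circ> X) \<phi>)
       \<and> (plus_dense TYPE('k) \<longrightarrow> tsat A I adef V (chi \<circ> X) \<psi> \<longrightarrow> tsat A I adef V X \<psi>)"
  using part1[OF K_pos A_fin C_def phi_C phi_wf V_fin]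
    part2[OF K_pos _ A_fin D_def psi_D psi_wf V_fin] by blast

end
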